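(* Let $\mathbb{X}$ be a finite set, $\mathcal{H}_A$ a finite-dimensional Hilbert space, and $\{\rho_A^x\}_{x\in\mathbb{X}}$ density operators on $\mathcal{H}_A$. Define the barycentric quantum Rényi leakage \[ \mathcal{B}(X\rightarrow A)_{\rho_A}=\min_{\pi\in\Delta(\mathbb{X})}\max_{x\in\mathbb{X}}\widetilde{D}_\infty\Big(\rho_A^x\,\Big\|\,\sum_{x'\in\mathbb{X}}\pi(x')\rho_A^{x'}\Big). \] Then: (a) $\mathcal{B}(X\rightarrow A)_{\rho_A}\geq 0$, with equality if and only if $\rho_A^x=\rho_A^{x'}$ for all $x,x'\in\mathbb{X}$; (b) for any unitary $U$ on $\mathcal{H}_A$, the barycentric quantum Rényi leakage of the family $\{U\rho_A^xU^\dagger\}_{x\in\mathbb{X}}$ equals that of $\{\rho_A^x\}_{x\in\mathbb{X}}$; (c) for any quantum channel $\mathcal{E}$ (completely positive trace-preserving map) with domain the operators on $\mathcal{H}_A$, the barycentric quantum Rényi leakage of the family $\{\mathcal{E}(\rho_A^x)\}_{x\in\mathbb{X}}$ is at most that of $\{\rho_A^x\}_{x\in\mathbb{X}}$.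
   Context: All logarithms are base 2. $\Delta(\mathbb{X})$ is the set of probability mass functions on $\mathbb{X}$. For a density operator $\rho$ and positive semi-definite $\sigma$, $\widetilde{D}_\infty(\rho\|\sigma)=\log\big(\inf\{\mu\in\mathbb{R}:\rho\leq\mu\sigma\}\big)$, equal to $+\infty$ if the support of $\rho$ is not contained in that of $\sigma$. *)

theory Defs
  imports "Jordan_Normal_Form.Schur_Decomposition" "HOL-Library.Extended_Real"
begin

text \<open>Operators on a d-dimensional Hilbert space are d x d complex matrices.\<close>

definition mtrace :: "complex mat \<Rightarrow> complex" where
  "mtrace A = (\<Sum>i<dim_row A. A $$ (i, i))"

definition psd :: "complex mat \<Rightarrow> bool" where
  "psd A \<longleftrightarrow> A \<in> carrier_mat (dim_row A) (dim_row A) \<and>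
     (\<forall>v \<in> carrier_vec (dim_row A).
        Im (conjugate v \<bullet> (A *\<^sub>v v)) = 0 \<and> Re (conjugate v \<bullet> (A *\<^sub>v v)) \<ge> 0)"

definition density :: "nat \<Rightarrow> complex mat \<Rightarrow> bool" where
  "density d A \<longleftrightarrow> A \<in> carrier_mat d d \<and> psd A \<and> mtrace A = 1"

definition unitary_mat :: "nat \<Rightarrow> complex mat \<Rightarrow> bool" where
  "unitary_mat d U \<longleftrightarrow> U \<in> carrier_mat d d \<and>
     U * mat_adjoint U = 1\<^sub>m d \<and> mat_adjoint U * U = 1\<^sub>m d"

definition pmf_on :: "('x::finite \<Rightarrow> real) \<Rightarrow> bool" where
  "pmf_on \<pi> \<longleftrightarrow> (\<forall>x. \<pi> x \<ge> 0) \<and> (\<Sum>x\<in>UNIV. \<pi> x) = 1"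

definition mixture :: "nat \<Rightarrow> ('x::finite \<Rightarrow> real) \<Rightarrow> ('x \<Rightarrow> complex mat) \<Rightarrow> complex mat" where
  "mixture d \<pi> \<rho> = mat d d (\<lambda>(i, j). \<Sum>x\<in>UNIV. complex_of_real (\<pi> x) * \<rho> x $$ (i, j))"

text \<open>Max-relative entropy: log2 inf {mu in R : rho <= mu sigma}, +infinity if the set is empty
  (equivalently, if supp rho is not contained in supp sigma).\<close>
definition Dmax :: "complex mat \<Rightarrow> complex mat \<Rightarrow> ereal" where
  "Dmax \<rho> \<sigma> =
     (if \<exists>\<mu>::real. psd (complex_of_real \<mu> \<cdot>\<^sub>m \<sigma> - \<rho>)
      then ereal (log 2 (Inf {\<mu>::real. psd (complex_of_real \<mu> \<cdot>\<^sub>m \<sigma> - \<rho>)}))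
      else \<infinity>)"

definition leakage :: "nat \<Rightarrow> ('x::finite \<Rightarrow> complex mat) \<Rightarrow> ereal" where
  "leakage d \<rho> = (INF \<pi>\<in>{\<pi>. pmf_on \<pi>}. SUP x\<in>UNIV. Dmax (\<rho> x) (mixture d \<pi> \<rho>))"

text \<open>Quantum channels from d x d to d' x d' matrices: linear, trace preserving,
  completely positive (id_k tensor E positive for every k).\<close>
definition block :: "nat \<Rightarrow> nat \<Rightarrow> nat \<Rightarrow> complex mat \<Rightarrow> complex mat" where
  "block d i j M = mat d d (\<lambda>(a, b). M $$ (i * d + a, j * d + b))"

definition ampliate :: "nat \<Rightarrow> nat \<Rightarrow> nat \<Rightarrow> (complex mat \<Rightarrow> complex mat) \<Rightarrow> complex mat \<Rightarrow> complex mat" where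
  "ampliate k d d' E M =
     mat (k * d') (k * d') (\<lambda>(a, b). E (block d (a div d') (b div d') M) $$ (a mod d', b mod d'))"

definition channel :: "nat \<Rightarrow> nat \<Rightarrow> (complex mat \<Rightarrow> complex mat) \<Rightarrow> bool" where
  "channel d d' E \<longleftrightarrow>
     (\<forall>A \<in> carrier_mat d d. E A \<in> carrier_mat d' d') \<and>
     (\<forall>A \<in> carrier_mat d d. \<forall>B \<in> carrier_mat d d. E (A + B) = E A + E B) \<and>
     (\<forall>A \<in> carrier_mat d d. \<forall>c. E (c \<cdot>\<^sub>m A) = c \<cdot>\<^sub>m E A) \<and>
     (\<forall>A \<in> carrier_mat d d. mtrace (E A) = mtrace A) \<and>
     (\<forall>k. \<forall>M \<in> carrier_mat (k * d) (k * d). psd M \<longrightarrow> psd (ampliate k d d' E M))"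

end

theory Submission imports Defs begin

declare minus_carrier_mat[simp]

definition Q :: "complex mat \<Rightarrow> nat \<Rightarrow> nat \<Rightarrow> complex \<Rightarrow> complex" where
  "Q A i j c = A$$(i,i) + c*A$$(i,j) + cnj c * A$$(j,i) + (cnj c * c) * A$$(j,j)"

definition uv :: "nat \<Rightarrow> nat \<Rightarrow> nat \<Rightarrow> complex \<Rightarrow> complex vec" where
  "uv n i j c = vec n (\<lambda>k. (if k = i then 1 else 0) + (if k = j then c else 0))"

lemma uv_carrier[simp]: "uv n i j c \<in> carrier_vec n"
  by (simp add: uv_def)

lemma mv_uv: assumes "A \<in> carrier_mat n n" "i < n" "j < n" "k < n"
  shows "(A *\<^sub>v uv n i j c) $ k = A$$(k,i) + c * A$$(k,j)"
proof -
  have "(A *\<^sub>v uv n i j c) $ k = (\<Sum>l<n. A$$(k,l) * ((if l = i then 1 else 0) + (if l = j then c else 0)))"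
    using assms by (simp add: scalar_prod_def uv_def row_def atLeast0LessThan)
  also have "\<dots> = (\<Sum>l<n. (if l = i then A$$(k,l) else 0)) + (\<Sum>l<n. (if l = j then A$$(k,l) * c else 0))"
    unfolding sum.distrib[symmetric] by (rule sum.cong) (auto simp: algebra_simps)
  also have "\<dots> = A$$(k,i) + c * A$$(k,j)" using assms by simp
  finally show ?thesis .
qed

lemma Q_qf: assumes "A \<in> carrier_mat n n" "i < n" "j < n"
  shows "conjugate (uv n i j c) \<bullet> (A *\<^sub>v uv n i j c) = Q A i j c"
proof -
  have "conjugate (uv n i j c) \<bullet> (A *\<^sub>v uv n i j c) =
     (\<Sum>k<n. ((if k = i then 1 else 0) + (if k = j then cnj c else 0)) * (A$$(k,i) + c * A$$(k,j)))"
    using assms mv_uv[OF assms] by (auto simp add: scalar_prod_def uv_def atLeast0LessThan intro!: sum.cong)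
  also have "\<dots> = (\<Sum>k<n. (if k = i then A$$(k,i) + c * A$$(k,j) else 0)) + (\<Sum>k<n. (if k = j then cnj c * (A$$(k,i) + c * A$$(k,j)) else 0))"
    unfolding sum.distrib[symmetric] by (rule sum.cong) (auto simp: algebra_simps)
  also have "\<dots> = Q A i j c" using assms by (simp add: Q_def algebra_simps)
  finally show ?thesis .
qed

lemma psd_Q: assumes "psd A" "A \<in> carrier_mat n n" "i < n" "j < n"
  shows "Im (Q A i j c) = 0" "Re (Q A i j c) \<ge> 0"
proof -
  have "uv n i j c \<in> carrier_vec (dim_row A)" using assms by simp
  then have "Im (conjugate (uv n i j c) \<bullet> (A *\<^sub>v uv n i j c)) = 0 \<and> Re (conjugate (uv n i j c) \<bullet> (A *\<^sub>v uv n i j c)) \<ge> 0"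
    using assms(1) unfolding psd_def by blast
  then show "Im (Q A i j c) = 0" "Re (Q A i j c) \<ge> 0"
    unfolding Q_qf[OF assms(2-4), of c] by auto
qed

lemma Q_lin: assumes "A \<in> carrier_mat n n" "B \<in> carrier_mat n n" "i < n" "j < n"
  shows "Q (a \<cdot>\<^sub>m A - B) i j c = a * Q A i j c - Q B i j c"
  using assms by (simp add: Q_def algebra_simps)

lemma Q_diff: assumes "A \<in> carrier_mat n n" "B \<in> carrier_mat n n" "i < n" "j < n"
  shows "Q (A - B) i j c = Q A i j c - Q B i j c"
  using assms by (simp add: Q_def algebra_simps)

lemma mtrace_lin: assumes "A \<in> carrier_mat n n" "B \<in> carrier_mat n n"
  shows "mtrace (a \<cdot>\<^sub>m A - B) = a * mtrace A - mtrace B"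
  using assms by (simp add: mtrace_def sum_subtractf sum_distrib_left)

lemma psd_diag: assumes "psd A" "A \<in> carrier_mat n n" "i < n"
  shows "Im (A$$(i,i)) = 0" "Re (A$$(i,i)) \<ge> 0"
  using psd_Q[OF assms(1,2,3,3), of 0] by (simp_all add: Q_def)

lemma psd_trace: assumes "psd A" "A \<in> carrier_mat n n"
  shows "Im (mtrace A) = 0" "Re (mtrace A) \<ge> 0" "i < n \<Longrightarrow> Re (A$$(i,i)) \<le> Re (mtrace A)"
proof -
  have d: "dim_row A = n" using assms by simp
  show "Im (mtrace A) = 0" using psd_diag[OF assms] by (simp add: mtrace_def d Im_sum)
  show "Re (mtrace A) \<ge> 0" using psd_diag[OF assms] by (auto simp add: mtrace_def d Re_sum intro!: sum_nonneg)
  assume i: "i < n"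
  have "Re (A$$(i,i)) \<le> (\<Sum>k<n. Re (A$$(k,k)))"
    by (rule member_le_sum[where f = "\<lambda>k. Re (A$$(k,k))"]) (use i psd_diag[OF assms] in auto)
  then show "Re (A$$(i,i)) \<le> Re (mtrace A)" by (simp add: mtrace_def d Re_sum)
qed

lemma Q_bound: assumes "psd A" "A \<in> carrier_mat n n" "i < n" "j < n" "cmod c \<le> 1"
  shows "Re (Q A i j c) \<le> 4 * Re (mtrace A)"
proof -
  have cc: "cnj c * c = complex_of_real ((cmod c)^2)"
    by (metis complex_norm_square mult.commute of_real_power)
  have sum: "Q A i j c + Q A i j (-c) = 2 * A$$(i,i) + 2 * (cnj c * c) * A$$(j,j)"
    by (simp add: Q_def algebra_simps)
  have "Re (Q A i j c) + Re (Q A i j (-c)) = 2 * Re (A$$(i,i)) + 2 * (cmod c)^2 * Re (A$$(j,j))"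
    using arg_cong[OF sum, of Re] unfolding cc by simp
  moreover have "Re (Q A i j (-c)) \<ge> 0" using psd_Q[OF assms(1-4)] by simp
  moreover have "(cmod c)^2 \<le> 1" using assms(5) by (simp add: power_le_one)
  moreover have "0 \<le> Re (A$$(j,j))" using psd_diag[OF assms(1,2,4)] by simp
  moreover have "Re (A$$(i,i)) \<le> Re (mtrace A)" "Re (A$$(j,j)) \<le> Re (mtrace A)"
    using psd_trace[OF assms(1,2)] assms(3,4) by auto
  moreover have "(cmod c)^2 * Re (A$$(j,j)) \<le> Re (A$$(j,j))"
    by (rule mult_left_le_one_le) (use calculation in auto)
  ultimately show ?thesis by linarith
qed

definition mixS :: "nat \<Rightarrow> ('x \<Rightarrow> real) \<Rightarrow> ('x \<Rightarrow> complex mat) \<Rightarrow> 'x set \<Rightarrow> complex mat" where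
  "mixS d \<pi> \<rho> S = mat d d (\<lambda>(i, j). \<Sum>x\<in>S. complex_of_real (\<pi> x) * \<rho> x $$ (i, j))"

lemma mixture_mixS: "mixture d \<pi> \<rho> = mixS d \<pi> \<rho> UNIV"
  by (simp add: mixture_def mixS_def)

lemma mixS_carrier[simp]: "mixS d \<pi> \<rho> S \<in> carrier_mat d d"
  by (simp add: mixS_def)

lemma mixS_empty: "mixS d \<pi> \<rho> {} = 0\<^sub>m d d"
  by (rule eq_matI) (auto simp: mixS_def)

lemma mixS_insert: assumes "finite S" "x \<notin> S" "\<rho> x \<in> carrier_mat d d"
  shows "mixS d \<pi> \<rho> (insert x S) = complex_of_real (\<pi> x) \<cdot>\<^sub>m \<rho> x + mixS d \<pi> \<rho> S"
  by (rule eq_matI) (use assms in \<open>auto simp: mixS_def\<close>)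

definition plin :: "nat \<Rightarrow> nat \<Rightarrow> (complex mat \<Rightarrow> complex mat) \<Rightarrow> bool" where
  "plin d d' F \<longleftrightarrow>
     (\<forall>A \<in> carrier_mat d d. F A \<in> carrier_mat d' d') \<and>
     (\<forall>A \<in> carrier_mat d d. \<forall>B \<in> carrier_mat d d. F (A + B) = F A + F B) \<and>
     (\<forall>A \<in> carrier_mat d d. \<forall>c. F (c \<cdot>\<^sub>m A) = c \<cdot>\<^sub>m F A) \<and>
     (\<forall>A \<in> carrier_mat d d. mtrace (F A) = mtrace A) \<and>
     (\<forall>A \<in> carrier_mat d d. psd A \<longrightarrow> psd (F A))"

lemma plin_mixS: assumes "plin d d' F" "\<And>x. \<rho> x \<in> carrier_mat d d" "finite S"
  shows "F (mixS d \<pi> \<rho> S) = mixS d' \<pi> (\<lambda>x. F (\<rho> x)) S"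
  using assms(3)
proof (induction S rule: finite_induct)
  case empty
  have z: "0\<^sub>m d d = (0::complex) \<cdot>\<^sub>m 0\<^sub>m d d" by (rule eq_matI) auto
  have "F (0\<^sub>m d d) = 0 \<cdot>\<^sub>m F (0\<^sub>m d d)" using assms(1) unfolding plin_def
    by (metis z zero_carrier_mat)
  also have "\<dots> = 0\<^sub>m d' d'"
  proof -
    have "F (0\<^sub>m d d) \<in> carrier_mat d' d'" using assms(1) unfolding plin_def by auto
    then show ?thesis by (intro eq_matI) auto
  qed
  finally show ?case by (simp add: mixS_empty)
next
  case (insert x S)
  have c: "\<And>x. F (\<rho> x) \<in> carrier_mat d' d'" using assms unfolding plin_def by auto
  show ?case using insert assms c unfolding mixS_insert[OF insert(1,2) assms(2)] mixS_insert[OF insert(1,2) c]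
    unfolding plin_def by simp
qed

lemma plin_mixture: assumes "plin d d' F" "\<And>x. \<rho> x \<in> carrier_mat d d"
  shows "F (mixture d \<pi> (\<rho>::'x::finite \<Rightarrow> complex mat)) = mixture d' \<pi> (\<lambda>x. F (\<rho> x))"
  unfolding mixture_mixS by (rule plin_mixS) (use assms in auto)

lemma mtrace_mixS: assumes "\<And>x. \<rho> x \<in> carrier_mat d d"
  shows "mtrace (mixS d \<pi> \<rho> S) = (\<Sum>x\<in>S. complex_of_real (\<pi> x) * mtrace (\<rho> x))"
proof -
  have "mtrace (mixS d \<pi> \<rho> S) = (\<Sum>i<d. \<Sum>x\<in>S. complex_of_real (\<pi> x) * \<rho> x $$ (i, i))"
    by (simp add: mtrace_def mixS_def)
  also have "\<dots> = (\<Sum>x\<in>S. \<Sum>i<d. complex_of_real (\<pi> x) * \<rho> x $$ (i, i))"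
    by (rule sum.swap)
  also have "\<dots> = (\<Sum>x\<in>S. complex_of_real (\<pi> x) * mtrace (\<rho> x))"
  proof (intro sum.cong refl)
    fix x have "dim_row (\<rho> x) = d" using assms by auto
    then show "(\<Sum>i<d. complex_of_real (\<pi> x) * \<rho> x $$ (i, i)) = complex_of_real (\<pi> x) * mtrace (\<rho> x)"
      by (simp add: mtrace_def sum_distrib_left)
  qed
  finally show ?thesis .
qed

lemma mtrace_mixture: assumes "\<And>x. \<rho> x \<in> carrier_mat d d" "\<And>x. mtrace (\<rho> x) = 1" "pmf_on \<pi>"
  shows "mtrace (mixture d \<pi> (\<rho>::'x::finite \<Rightarrow> complex mat)) = 1"
proof -
  have "mtrace (mixture d \<pi> \<rho>) = (\<Sum>x\<in>UNIV. complex_of_real (\<pi> x))"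
    unfolding mixture_mixS mtrace_mixS[OF assms(1)] using assms(2) by simp
  also have "\<dots> = complex_of_real (\<Sum>x\<in>UNIV. \<pi> x)" by simp
  also have "\<dots> = 1" using assms(3) unfolding pmf_on_def by simp
  finally show ?thesis .
qed

definition Sset :: "complex mat \<Rightarrow> complex mat \<Rightarrow> real set" where
  "Sset \<rho> \<sigma> = {\<mu>::real. psd (complex_of_real \<mu> \<cdot>\<^sub>m \<sigma> - \<rho>)}"

lemma Dmax_Sset: "Dmax \<rho> \<sigma> = (if Sset \<rho> \<sigma> \<noteq> {} then ereal (log 2 (Inf (Sset \<rho> \<sigma>))) else \<infinity>)"
  unfolding Dmax_def Sset_def by auto

lemma S_ge1: assumes "\<rho> \<in> carrier_mat n n" "\<sigma> \<in> carrier_mat n n" "mtrace \<rho> = 1" "mtrace \<sigma> = 1"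
  and "\<mu> \<in> Sset \<rho> \<sigma>" shows "\<mu> \<ge> 1"
proof -
  have "psd (complex_of_real \<mu> \<cdot>\<^sub>m \<sigma> - \<rho>)" using assms(5) by (simp add: Sset_def)
  moreover have "complex_of_real \<mu> \<cdot>\<^sub>m \<sigma> - \<rho> \<in> carrier_mat n n" using assms by simp
  ultimately have "Re (mtrace (complex_of_real \<mu> \<cdot>\<^sub>m \<sigma> - \<rho>)) \<ge> 0" using psd_trace by blast
  then show ?thesis unfolding mtrace_lin[OF assms(2,1)] assms by simp
qed

lemma S_props: assumes "\<rho> \<in> carrier_mat n n" "\<sigma> \<in> carrier_mat n n" "mtrace \<rho> = 1" "mtrace \<sigma> = 1"
  and "Sset \<rho> \<sigma> \<noteq> {}"
  shows "bdd_below (Sset \<rho> \<sigma>)" "Inf (Sset \<rho> \<sigma>) \<ge> 1"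
proof -
  show "bdd_below (Sset \<rho> \<sigma>)" by (rule bdd_belowI[where m=1]) (use S_ge1[OF assms(1-4)] in auto)
  show "Inf (Sset \<rho> \<sigma>) \<ge> 1" using S_ge1[OF assms(1-4)] assms(5) by (auto intro: cInf_greatest)
qed

lemma Dmax_nonneg: assumes "\<rho> \<in> carrier_mat n n" "\<sigma> \<in> carrier_mat n n" "mtrace \<rho> = 1" "mtrace \<sigma> = 1"
  shows "Dmax \<rho> \<sigma> \<ge> 0"
proof (cases "Sset \<rho> \<sigma> = {}")
  case True then show ?thesis by (simp add: Dmax_Sset)
next
  case False
  then have "Inf (Sset \<rho> \<sigma>) \<ge> 1" using S_props[OF assms] by blast
  then show ?thesis using False by (simp add: Dmax_Sset)
qed

lemma Dmax_lt: assumes "\<rho> \<in> carrier_mat n n" "\<sigma> \<in> carrier_mat n n" "mtrace \<rho> = 1" "mtrace \<sigma> = 1"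
  and "Dmax \<rho> \<sigma> < ereal e"
  shows "\<exists>\<mu>. \<mu> \<in> Sset \<rho> \<sigma> \<and> \<mu> < 2 powr e"
proof -
  have ne: "Sset \<rho> \<sigma> \<noteq> {}" using assms(5) by (auto simp: Dmax_Sset split: if_splits)
  then have lt: "log 2 (Inf (Sset \<rho> \<sigma>)) < e" using assms(5) by (simp add: Dmax_Sset)
  have ge: "Inf (Sset \<rho> \<sigma>) \<ge> 1" using S_props[OF assms(1-4) ne] by blast
  have "Inf (Sset \<rho> \<sigma>) = 2 powr (log 2 (Inf (Sset \<rho> \<sigma>)))" using ge by simp
  also have "\<dots> < 2 powr e" using lt by simp
  finally have "Inf (Sset \<rho> \<sigma>) < 2 powr e" .
  then show ?thesis using cInf_lessD[OF ne] by blast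
qed

lemma plin_lin: assumes "plin d d' F" "A \<in> carrier_mat d d" "B \<in> carrier_mat d d"
  shows "F (c \<cdot>\<^sub>m A - B) = c \<cdot>\<^sub>m F A - F B"
proof -
  have e: "c \<cdot>\<^sub>m A - B = c \<cdot>\<^sub>m A + (-1) \<cdot>\<^sub>m B" using assms(2,3) by (intro eq_matI) auto
  have cA: "F A \<in> carrier_mat d' d'" "F B \<in> carrier_mat d' d'" using assms unfolding plin_def by auto
  have "F (c \<cdot>\<^sub>m A - B) = c \<cdot>\<^sub>m F A + (-1) \<cdot>\<^sub>m F B" unfolding e using assms unfolding plin_def by simp
  also have "\<dots> = c \<cdot>\<^sub>m F A - F B" using cA by (intro eq_matI) auto
  finally show ?thesis .
qed

lemma plin_density: assumes "plin d d' F" "A \<in> carrier_mat d d" "mtrace A = 1"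
  shows "F A \<in> carrier_mat d' d'" "mtrace (F A) = 1"
  using assms unfolding plin_def by auto

lemma Dmax_mono: assumes "plin d d' F" "\<rho> \<in> carrier_mat d d" "\<sigma> \<in> carrier_mat d d" "mtrace \<rho> = 1" "mtrace \<sigma> = 1"
  shows "Dmax (F \<rho>) (F \<sigma>) \<le> Dmax \<rho> \<sigma>"
proof (cases "Sset \<rho> \<sigma> = {}")
  case True then show ?thesis by (simp add: Dmax_Sset)
next
  case False
  have sub: "Sset \<rho> \<sigma> \<subseteq> Sset (F \<rho>) (F \<sigma>)"
  proof
    fix \<mu> assume "\<mu> \<in> Sset \<rho> \<sigma>"
    then have "psd (complex_of_real \<mu> \<cdot>\<^sub>m \<sigma> - \<rho>)" by (simp add: Sset_def)
    moreover have "complex_of_real \<mu> \<cdot>\<^sub>m \<sigma> - \<rho> \<in> carrier_mat d d" using assms by simp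
    ultimately have "psd (F (complex_of_real \<mu> \<cdot>\<^sub>m \<sigma> - \<rho>))" using assms(1) unfolding plin_def by blast
    then show "\<mu> \<in> Sset (F \<rho>) (F \<sigma>)" unfolding plin_lin[OF assms(1,3,2)] Sset_def by simp
  qed
  have ne': "Sset (F \<rho>) (F \<sigma>) \<noteq> {}" using False sub by blast
  note P = plin_density[OF assms(1,2,4)] plin_density[OF assms(1,3,5)]
  have "Inf (Sset (F \<rho>) (F \<sigma>)) \<le> Inf (Sset \<rho> \<sigma>)"
    by (rule cInf_superset_mono[OF False _ sub]) (rule S_props(1)[OF P(1,3,2,4) ne'])
  moreover have "Inf (Sset (F \<rho>) (F \<sigma>)) \<ge> 1" by (rule S_props(2)[OF P(1,3,2,4) ne'])
  ultimately show ?thesis using False ne' by (simp add: Dmax_Sset)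
qed

lemma leak_mono: assumes "plin d d' F" "\<And>x. \<rho> x \<in> carrier_mat d d" "\<And>x. mtrace (\<rho> x) = 1"
  shows "leakage d' (\<lambda>x. F (\<rho> x)) \<le> leakage d (\<rho>::'x::finite \<Rightarrow> complex mat)"
  unfolding leakage_def
proof (rule INF_mono)
  fix \<pi> :: "'x \<Rightarrow> real" assume p: "\<pi> \<in> {\<pi>. pmf_on \<pi>}"
  have "(SUP x\<in>UNIV. Dmax (F (\<rho> x)) (mixture d' \<pi> (\<lambda>x. F (\<rho> x)))) \<le> (SUP x\<in>UNIV. Dmax (\<rho> x) (mixture d \<pi> \<rho>))"
  proof (rule SUP_mono)
    fix x :: 'x
    have cm: "mixture d \<pi> \<rho> \<in> carrier_mat d d" by (simp add: mixture_def)
    have tm: "mtrace (mixture d \<pi> \<rho>) = 1" using mtrace_mixture[where \<rho>=\<rho>] assms p by auto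
    have "Dmax (F (\<rho> x)) (mixture d' \<pi> (\<lambda>x. F (\<rho> x))) = Dmax (F (\<rho> x)) (F (mixture d \<pi> \<rho>))"
      using plin_mixture[where \<rho>=\<rho>, OF assms(1,2)] by simp
    also have "\<dots> \<le> Dmax (\<rho> x) (mixture d \<pi> \<rho>)"
      by (rule Dmax_mono[OF assms(1) assms(2)[of x] cm assms(3)[of x] tm])
    finally show "\<exists>m\<in>UNIV. Dmax (F (\<rho> x)) (mixture d' \<pi> (\<lambda>x. F (\<rho> x))) \<le> Dmax (\<rho> m) (mixture d \<pi> \<rho>)" by blast
  qed
  then show "\<exists>n\<in>{\<pi>. pmf_on \<pi>}. (SUP x\<in>UNIV. Dmax (F (\<rho> x)) (mixture d' n (\<lambda>x. F (\<rho> x)))) \<le> (SUP x\<in>UNIV. Dmax (\<rho> x) (mixture d \<pi> \<rho>))"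
    using p by blast
qed

lemma adj_dims[simp]: "dim_row (mat_adjoint A) = dim_col A" "dim_col (mat_adjoint A) = dim_row A"
  unfolding mat_adjoint_def by simp_all
lemma adj_carrier[simp]: "A \<in> carrier_mat n m \<Longrightarrow> mat_adjoint A \<in> carrier_mat m n"
  unfolding carrier_mat_def by simp
lemma adj_index[simp]: "i < dim_col (A::complex mat) \<Longrightarrow> j < dim_row A \<Longrightarrow> mat_adjoint A $$ (i, j) = cnj (A $$ (j, i))"
  unfolding mat_adjoint_def by (simp add: mat_of_rows_index)
lemma adj_adj: "mat_adjoint (mat_adjoint (A::complex mat)) = A"
  by (rule eq_matI) simp_all

lemma adj_sprod: fixes V :: "complex mat" assumes "V \<in> carrier_mat n n" "v \<in> carrier_vec n" "w \<in> carrier_vec n"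
  shows "conjugate v \<bullet> (V *\<^sub>v w) = conjugate (mat_adjoint V *\<^sub>v v) \<bullet> w"
proof -
  have "conjugate v \<bullet> (V *\<^sub>v w) = (\<Sum>i<n. cnj (v $ i) * (\<Sum>j<n. V $$ (i,j) * w $ j))"
    using assms by (simp add: scalar_prod_def row_def atLeast0LessThan)
  also have "\<dots> = (\<Sum>i<n. \<Sum>j<n. cnj (v $ i) * V $$ (i,j) * w $ j)"
    by (simp add: sum_distrib_left mult.assoc)
  also have "\<dots> = (\<Sum>j<n. \<Sum>i<n. cnj (v $ i) * V $$ (i,j) * w $ j)"
    by (rule sum.swap)
  also have "\<dots> = (\<Sum>j<n. (\<Sum>i<n. cnj (v $ i) * V $$ (i,j)) * w $ j)"
    by (simp add: sum_distrib_right)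
  also have "\<dots> = (\<Sum>j<n. cnj (\<Sum>i<n. cnj (V $$ (i,j)) * v $ i) * w $ j)"
    by (simp add: mult.commute)
  also have "\<dots> = conjugate (mat_adjoint V *\<^sub>v v) \<bullet> w"
    using assms by (simp add: scalar_prod_def row_def atLeast0LessThan)
  finally show ?thesis .
qed

lemma mtrace_comm: fixes X :: "complex mat" assumes "X \<in> carrier_mat n m" "Y \<in> carrier_mat m n"
  shows "mtrace (X * Y) = mtrace (Y * X)"
proof -
  have "mtrace (X * Y) = (\<Sum>i<n. \<Sum>k<m. X $$ (i,k) * Y $$ (k,i))"
    using assms by (simp add: mtrace_def scalar_prod_def row_def col_def atLeast0LessThan)
  also have "\<dots> = (\<Sum>k<m. \<Sum>i<n. Y $$ (k,i) * X $$ (i,k))"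
    by (subst sum.swap) (simp add: mult.commute)
  also have "\<dots> = mtrace (Y * X)"
    using assms by (simp add: mtrace_def scalar_prod_def row_def col_def atLeast0LessThan)
  finally show ?thesis .
qed

lemma plin_conj: fixes V :: "complex mat" assumes V: "V \<in> carrier_mat d d" and VV: "mat_adjoint V * V = 1\<^sub>m d"
  shows "plin d d (\<lambda>A. V * A * mat_adjoint V)"
  unfolding plin_def
proof (intro conjI ballI allI impI)
  have Va: "mat_adjoint V \<in> carrier_mat d d" using V by simp
  fix A :: "complex mat" assume A: "A \<in> carrier_mat d d"
  have VAV: "V * A * mat_adjoint V \<in> carrier_mat d d" using mult_carrier_mat[OF mult_carrier_mat[OF V A] Va] .
  then show "V * A * mat_adjoint V \<in> carrier_mat d d" .
  { fix B :: "complex mat" assume B: "B \<in> carrier_mat d d"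
    show "V * (A + B) * mat_adjoint V = V * A * mat_adjoint V + V * B * mat_adjoint V"
    proof -
      have "V * (A + B) = V * A + V * B" by (rule mult_add_distrib_mat[OF V A B])
      also have "(V * A + V * B) * mat_adjoint V = V * A * mat_adjoint V + V * B * mat_adjoint V"
        by (rule add_mult_distrib_mat[OF mult_carrier_mat[OF V A] mult_carrier_mat[OF V B] Va])
      finally show ?thesis .
    qed }
  { fix c show "V * (c \<cdot>\<^sub>m A) * mat_adjoint V = c \<cdot>\<^sub>m (V * A * mat_adjoint V)"
      using mult_smult_distrib[OF V A, of c] mult_smult_assoc_mat[OF mult_carrier_mat[OF V A] Va, of c] by simp }
  show "mtrace (V * A * mat_adjoint V) = mtrace A"
  proof -
    have "mtrace (V * A * mat_adjoint V) = mtrace (mat_adjoint V * (V * A))"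
      by (rule mtrace_comm[of _ d d]) (use A V Va in auto)
    also have "mat_adjoint V * (V * A) = (mat_adjoint V * V) * A" using assoc_mult_mat[OF Va V A] by simp
    also have "\<dots> = A" using VV A by simp
    finally show ?thesis .
  qed
  assume pA: "psd A"
  show "psd (V * A * mat_adjoint V)"
    unfolding psd_def
  proof (intro conjI ballI)
    show "V * A * mat_adjoint V \<in> carrier_mat (dim_row (V * A * mat_adjoint V)) (dim_row (V * A * mat_adjoint V))"
      using VAV V by simp
    fix v :: "complex vec" assume "v \<in> carrier_vec (dim_row (V * A * mat_adjoint V))"
    then have v: "v \<in> carrier_vec d" using VAV V by simp
    define u where "u = mat_adjoint V *\<^sub>v v"
    have u: "u \<in> carrier_vec d" using Va v by (simp add: u_def)
    have "conjugate v \<bullet> ((V * A * mat_adjoint V) *\<^sub>v v) = conjugate v \<bullet> (V *\<^sub>v (A *\<^sub>v u))"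
      using assoc_mult_mat_vec[OF mult_carrier_mat[OF V A] Va v] assoc_mult_mat_vec[OF V A u] by (simp add: u_def)
    also have "\<dots> = conjugate u \<bullet> (A *\<^sub>v u)"
      unfolding u_def by (rule adj_sprod[OF V v]) (use A u u_def in simp)
    finally have e: "conjugate v \<bullet> ((V * A * mat_adjoint V) *\<^sub>v v) = conjugate u \<bullet> (A *\<^sub>v u)" .
    have "u \<in> carrier_vec (dim_row A)" using u A by simp
    then show "Im (conjugate v \<bullet> ((V * A * mat_adjoint V) *\<^sub>v v)) = 0"
      "0 \<le> Re (conjugate v \<bullet> ((V * A * mat_adjoint V) *\<^sub>v v))"
      unfolding e using pA unfolding psd_def by auto
  qed
qed

lemma arith_key:
  fixes a b s r r' \<delta> :: real
  assumes "1 \<le> a" "a \<le> 1 + \<delta>" "1 \<le> b" "b \<le> 1 + \<delta>" "\<delta> \<le> 1"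
    "0 \<le> a*s - r" "a*s - r \<le> 4*(a-1)" "0 \<le> b*s - r'" "b*s - r' \<le> 4*(b-1)"
    "0 \<le> r" "r \<le> 4"
  shows "\<bar>r - r'\<bar> \<le> 20*\<delta>"
proof -
  have as0: "a*s \<ge> 0" using assms by linarith
  have s0: "s \<ge> 0" using as0 assms(1) by (simp add: zero_le_mult_iff)
  have "s \<le> a*s" using s0 assms(1) by (simp add: mult_right_mono[of 1 a s, simplified])
  moreover have "a*s \<le> 8"
  proof -
    have "a*s \<le> r + 4*(a-1)" using assms(7) by linarith
    also have "\<dots> \<le> 4 + 4*\<delta>" using assms(2,11) by (smt (verit))
    also have "\<dots> \<le> 8" using assms(5) by linarith
    finally show ?thesis .
  qed
  ultimately have s8: "s \<le> 8" by linarith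
  have ab: "\<bar>a - b\<bar> \<le> \<delta>" using assms by linarith
  have "\<bar>(a - b) * s\<bar> \<le> \<delta> * 8" unfolding abs_mult using ab s8 s0
    by (intro mult_mono) auto
  moreover have "r - r' = (a - b) * s - (a*s - r) + (b*s - r')" by (simp add: algebra_simps)
  ultimately show ?thesis using assms by (smt (verit))
qed

lemma small_zero: fixes t :: real assumes "\<And>\<delta>. 0 < \<delta> \<Longrightarrow> \<delta> \<le> 1 \<Longrightarrow> \<bar>t\<bar> \<le> 20*\<delta>"
  shows "t = 0"
proof (rule ccontr)
  assume "t \<noteq> 0"
  then have p: "\<bar>t\<bar> > 0" by simp
  define \<delta> where "\<delta> = min 1 (\<bar>t\<bar>/40)"
  have "0 < \<delta>" "\<delta> \<le> 1" using p by (auto simp: \<delta>_def)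
  then have "\<bar>t\<bar> \<le> 20*\<delta>" using assms by blast
  moreover have "20*\<delta> \<le> \<bar>t\<bar>/2" by (simp add: \<delta>_def)
  ultimately show False using p by linarith
qed

lemma psd_zero: "psd (0\<^sub>m n n :: complex mat)"
  unfolding psd_def
proof (intro conjI ballI)
  fix v :: "complex vec" assume "v \<in> carrier_vec (dim_row (0\<^sub>m n n :: complex mat))"
  then have v: "v \<in> carrier_vec n" by simp
  have "(0\<^sub>m n n :: complex mat) *\<^sub>v v = 0\<^sub>v n" using v by (intro eq_vecI) (auto simp: scalar_prod_def)
  moreover have "conjugate v \<bullet> 0\<^sub>v n = 0" using v by (simp add: scalar_prod_def)
  ultimately show "Im (conjugate v \<bullet> ((0\<^sub>m n n :: complex mat) *\<^sub>v v)) = 0"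
    "0 \<le> Re (conjugate v \<bullet> ((0\<^sub>m n n :: complex mat) *\<^sub>v v))" by simp_all
qed simp

lemma Dmax_self: assumes "\<rho> \<in> carrier_mat n n" "mtrace \<rho> = 1"
  shows "Dmax \<rho> \<rho> = 0"
proof -
  have "complex_of_real 1 \<cdot>\<^sub>m \<rho> - \<rho> = 0\<^sub>m n n" using assms(1) by (intro eq_matI) auto
  then have one: "1 \<in> Sset \<rho> \<rho>" unfolding Sset_def using psd_zero by simp
  have "Inf (Sset \<rho> \<rho>) = 1"
    by (rule cInf_eq_minimum[OF one]) (rule S_ge1[OF assms(1) assms(1) assms(2) assms(2)])
  then show ?thesis using one by (auto simp: Dmax_Sset)
qed

lemma density_D: assumes "density d A" shows "A \<in> carrier_mat d d" "psd A" "mtrace A = 1"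
  using assms unfolding density_def by auto

lemma part_nonneg: fixes \<rho> :: "'x::finite \<Rightarrow> complex mat"
  assumes "\<forall>x. density d (\<rho> x)" shows "leakage d \<rho> \<ge> 0"
  unfolding leakage_def
proof (rule INF_greatest)
  fix \<pi> :: "'x \<Rightarrow> real" assume p: "\<pi> \<in> {\<pi>. pmf_on \<pi>}"
  have C: "\<And>x. \<rho> x \<in> carrier_mat d d" "\<And>x. mtrace (\<rho> x) = 1" using assms(1) unfolding density_def by auto
  have cm: "mixture d \<pi> \<rho> \<in> carrier_mat d d" by (simp add: mixture_def)
  have tm: "mtrace (mixture d \<pi> \<rho>) = 1" using mtrace_mixture[where \<rho>=\<rho>] C p by auto
  have "0 \<le> Dmax (\<rho> undefined) (mixture d \<pi> \<rho>)" by (rule Dmax_nonneg[OF C(1) cm C(2) tm])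
  also have "\<dots> \<le> (SUP x\<in>UNIV. Dmax (\<rho> x) (mixture d \<pi> \<rho>))" by (rule SUP_upper) simp
  finally show "0 \<le> (SUP x\<in>UNIV. Dmax (\<rho> x) (mixture d \<pi> \<rho>))" .
qed

lemma part_eq_imp: fixes \<rho> :: "'x::finite \<Rightarrow> complex mat"
  assumes "\<forall>x. density d (\<rho> x)" "\<forall>x x'. \<rho> x = \<rho> x'" shows "leakage d \<rho> = 0"
proof -
  have C: "\<And>x. \<rho> x \<in> carrier_mat d d" "\<And>x. mtrace (\<rho> x) = 1" using assms(1) unfolding density_def by auto
  define \<pi>0 :: "'x \<Rightarrow> real" where "\<pi>0 = (\<lambda>x. 1 / real (card (UNIV :: 'x set)))"
  have p: "pmf_on \<pi>0" unfolding pmf_on_def \<pi>0_def by simp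
  have mix: "mixture d \<pi>0 \<rho> = \<rho> undefined"
  proof (rule eq_matI)
    fix i j assume ij: "i < dim_row (\<rho> undefined)" "j < dim_col (\<rho> undefined)"
    have "(\<Sum>x\<in>UNIV. complex_of_real (\<pi>0 x) * \<rho> x $$ (i, j)) = (\<Sum>x\<in>UNIV. complex_of_real (\<pi>0 x)) * \<rho> undefined $$ (i, j)"
    proof -
      have "(\<Sum>x\<in>UNIV. complex_of_real (\<pi>0 x) * \<rho> x $$ (i, j)) = (\<Sum>x\<in>UNIV. complex_of_real (\<pi>0 x) * \<rho> undefined $$ (i, j))"
        by (rule sum.cong[OF refl]) (metis assms(2))
      also have "\<dots> = (\<Sum>x\<in>UNIV. complex_of_real (\<pi>0 x)) * \<rho> undefined $$ (i, j)"
        by (rule sum_distrib_right[symmetric])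
      finally show ?thesis .
    qed
    also have "(\<Sum>x\<in>UNIV. complex_of_real (\<pi>0 x)) = complex_of_real (\<Sum>x\<in>UNIV. \<pi>0 x)" by simp
    also have "(\<Sum>x\<in>UNIV. \<pi>0 x) = 1" using p unfolding pmf_on_def by simp
    finally show "mixture d \<pi>0 \<rho> $$ (i, j) = \<rho> undefined $$ (i, j)"
      using ij C(1)[of undefined] by (simp add: mixture_def)
  qed (use C(1)[of undefined] in \<open>auto simp: mixture_def\<close>)
  have h: "\<And>x. Dmax (\<rho> x) (mixture d \<pi>0 \<rho>) = 0"
    using Dmax_self[OF C(1) C(2)] assms(2) mix by metis
  have "leakage d \<rho> \<le> (SUP x\<in>UNIV. Dmax (\<rho> x) (mixture d \<pi>0 \<rho>))"
    unfolding leakage_def by (rule INF_lower) (use p in simp)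
  also have "\<dots> = 0" using h by simp
  finally show ?thesis using part_nonneg[OF assms(1)] by simp
qed

lemma part_zero_imp: fixes \<rho> :: "'x::finite \<Rightarrow> complex mat"
  assumes dens: "\<forall>x. density d (\<rho> x)" and L: "leakage d \<rho> = 0"
  shows "\<rho> x = \<rho> x'"
proof -
  have C: "\<And>x. \<rho> x \<in> carrier_mat d d" "\<And>x. psd (\<rho> x)" "\<And>x. mtrace (\<rho> x) = 1"
    using dens unfolding density_def by auto
  have key: "Q (\<rho> x) i j c = Q (\<rho> x') i j c" if ij: "i < d" "j < d" and c: "cmod c \<le> 1" for i j c
  proof -
    have bound: "\<bar>Re (Q (\<rho> x) i j c) - Re (Q (\<rho> x') i j c)\<bar> \<le> 20*\<delta>" if \<delta>: "0 < \<delta>" "\<delta> \<le> 1" for \<delta>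
    proof -
      define e where "e = log 2 (1+\<delta>)"
      have e2: "2 powr e = 1+\<delta>" using \<delta> by (simp add: e_def)
      have "e > 0" using \<delta> by (simp add: e_def)
      then have "leakage d \<rho> < ereal e" using L by simp
      then obtain \<pi> where p: "pmf_on \<pi>" and lt0: "(SUP y\<in>UNIV. Dmax (\<rho> y) (mixture d \<pi> \<rho>)) < ereal e"
        unfolding leakage_def by (auto simp: INF_less_iff)
      define \<sigma> where "\<sigma> = mixture d \<pi> \<rho>"
      have lt: "(SUP y\<in>UNIV. Dmax (\<rho> y) \<sigma>) < ereal e" using lt0 by (simp add: \<sigma>_def)
      have \<sigma>c: "\<sigma> \<in> carrier_mat d d" by (simp add: \<sigma>_def mixture_def)
      have \<sigma>t: "mtrace \<sigma> = 1" unfolding \<sigma>_def using mtrace_mixture[where \<rho>=\<rho>] C p by auto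
      have lt': "Dmax (\<rho> y) \<sigma> < ereal e" for y
      proof -
        have "Dmax (\<rho> y) \<sigma> \<le> (SUP y\<in>UNIV. Dmax (\<rho> y) \<sigma>)" by (rule SUP_upper) simp
        then show ?thesis using lt by (rule le_less_trans)
      qed
      have approx: "\<exists>a. 1 \<le> a \<and> a \<le> 1+\<delta> \<and> 0 \<le> a * Re (Q \<sigma> i j c) - Re (Q (\<rho> y) i j c) \<and>
          a * Re (Q \<sigma> i j c) - Re (Q (\<rho> y) i j c) \<le> 4*(a-1)" for y
      proof -
        obtain a where aS: "a \<in> Sset (\<rho> y) \<sigma>" and a_lt: "a < 2 powr e"
          using Dmax_lt[OF C(1) \<sigma>c C(3) \<sigma>t lt'] by blast
        have a1: "1 \<le> a" by (rule S_ge1[OF C(1) \<sigma>c C(3) \<sigma>t aS])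
        define P where "P = complex_of_real a \<cdot>\<^sub>m \<sigma> - \<rho> y"
        have Pp: "psd P" using aS by (simp add: Sset_def P_def)
        have Pc: "P \<in> carrier_mat d d" using \<sigma>c C(1) by (simp add: P_def)
        have QP: "Q P i j c = complex_of_real a * Q \<sigma> i j c - Q (\<rho> y) i j c"
          unfolding P_def by (rule Q_lin[OF \<sigma>c C(1) ij])
        have tP: "mtrace P = complex_of_real a - 1" unfolding P_def mtrace_lin[OF \<sigma>c C(1)] \<sigma>t C(3) by simp
        have "0 \<le> Re (Q P i j c)" by (rule psd_Q(2)[OF Pp Pc ij])
        moreover have "Re (Q P i j c) \<le> 4 * Re (mtrace P)" by (rule Q_bound[OF Pp Pc ij c])
        ultimately show ?thesis using a1 a_lt e2 unfolding QP tP by (intro exI[of _ a]) auto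
      qed
      obtain a where a: "1 \<le> a" "a \<le> 1+\<delta>" "0 \<le> a * Re (Q \<sigma> i j c) - Re (Q (\<rho> x) i j c)"
          "a * Re (Q \<sigma> i j c) - Re (Q (\<rho> x) i j c) \<le> 4*(a-1)" using approx[of x] by blast
      obtain b where b: "1 \<le> b" "b \<le> 1+\<delta>" "0 \<le> b * Re (Q \<sigma> i j c) - Re (Q (\<rho> x') i j c)"
          "b * Re (Q \<sigma> i j c) - Re (Q (\<rho> x') i j c) \<le> 4*(b-1)" using approx[of x'] by blast
      have r: "0 \<le> Re (Q (\<rho> x) i j c)" "Re (Q (\<rho> x) i j c) \<le> 4"
        using psd_Q(2)[OF C(2) C(1) ij] Q_bound[OF C(2) C(1) ij c] C(3) by auto
      show ?thesis by (rule arith_key[where s="Re (Q \<sigma> i j c)"]) (use a b r \<delta> in auto)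
    qed
    have "Re (Q (\<rho> x) i j c) - Re (Q (\<rho> x') i j c) = 0" by (rule small_zero) (use bound in auto)
    moreover have "Im (Q (\<rho> x) i j c) = 0" "Im (Q (\<rho> x') i j c) = 0" using psd_Q(1)[OF C(2) C(1) ij] by auto
    ultimately show ?thesis by (intro complex_eqI) auto
  qed
  show ?thesis
  proof (rule eq_matI)
    fix i j assume i: "i < dim_row (\<rho> x')" and j: "j < dim_col (\<rho> x')"
    have ij: "i < d" "j < d" using i j C(1)[of x'] by auto
    let ?A = "\<rho> x" let ?B = "\<rho> x'"
    have d1: "?A $$ (i,i) = ?B $$ (i,i)" "?A $$ (j,j) = ?B $$ (j,j)"
      using key[of i i 0] key[of j j 0] ij by (auto simp: Q_def)
    have e1: "?A$$(i,j) + ?A$$(j,i) = ?B$$(i,j) + ?B$$(j,i)"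
      using key[of i j 1] ij d1 by (simp add: Q_def)
    have e2: "?A$$(i,j) - ?A$$(j,i) = ?B$$(i,j) - ?B$$(j,i)"
    proof -
      have "\<i> * ?A$$(i,j) - \<i> * ?A$$(j,i) = \<i> * ?B$$(i,j) - \<i> * ?B$$(j,i)"
        using key[of i j \<i>] ij d1 by (simp add: Q_def algebra_simps)
      then have "\<i> * (?A$$(i,j) - ?A$$(j,i)) = \<i> * (?B$$(i,j) - ?B$$(j,i))" by (simp add: algebra_simps)
      then show ?thesis by simp
    qed
    have "(?A$$(i,j) + ?A$$(j,i)) + (?A$$(i,j) - ?A$$(j,i)) = (?B$$(i,j) + ?B$$(j,i)) + (?B$$(i,j) - ?B$$(j,i))"
      by (simp only: e1 e2)
    then show "?A $$ (i,j) = ?B $$ (i,j)" by simp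
  qed (use C(1)[of x] C(1)[of x'] in auto)
qed

lemma part_unitary: fixes \<rho> :: "'x::finite \<Rightarrow> complex mat"
  assumes "\<forall>x. density d (\<rho> x)" "unitary_mat d U"
  shows "leakage d (\<lambda>x. U * \<rho> x * mat_adjoint U) = leakage d \<rho>"
proof -
  have C: "\<And>x. \<rho> x \<in> carrier_mat d d" "\<And>x. mtrace (\<rho> x) = 1" using assms(1) unfolding density_def by auto
  have Uc: "U \<in> carrier_mat d d" and U1: "U * mat_adjoint U = 1\<^sub>m d" and U2: "mat_adjoint U * U = 1\<^sub>m d"
    using assms(2) unfolding unitary_mat_def by auto
  have Ua: "mat_adjoint U \<in> carrier_mat d d" using Uc by simp
  have F: "plin d d (\<lambda>A. U * A * mat_adjoint U)" by (rule plin_conj[OF Uc U2])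
  have G: "plin d d (\<lambda>A. mat_adjoint U * A * mat_adjoint (mat_adjoint U))"
    by (rule plin_conj[OF Ua]) (simp add: adj_adj U1)
  have le1: "leakage d (\<lambda>x. U * \<rho> x * mat_adjoint U) \<le> leakage d \<rho>"
    by (rule leak_mono[OF F]) (use C in auto)
  have FC: "\<And>x. U * \<rho> x * mat_adjoint U \<in> carrier_mat d d" "\<And>x. mtrace (U * \<rho> x * mat_adjoint U) = 1"
    using plin_density[OF F C(1) C(2)] by auto
  have inv: "mat_adjoint U * (U * \<rho> x * mat_adjoint U) * mat_adjoint (mat_adjoint U) = \<rho> x" for x
  proof -
    have "U * \<rho> x * mat_adjoint U = U * (\<rho> x * mat_adjoint U)" by (rule assoc_mult_mat[OF Uc C(1) Ua])
    then have "mat_adjoint U * (U * \<rho> x * mat_adjoint U) = (mat_adjoint U * U) * (\<rho> x * mat_adjoint U)"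
      using assoc_mult_mat[OF Ua Uc mult_carrier_mat[OF C(1) Ua]] by simp
    also have "\<dots> = \<rho> x * mat_adjoint U" unfolding U2 by (rule left_mult_one_mat[OF mult_carrier_mat[OF C(1) Ua]])
    finally have "mat_adjoint U * (U * \<rho> x * mat_adjoint U) * U = \<rho> x * mat_adjoint U * U" by simp
    also have "\<dots> = \<rho> x * (mat_adjoint U * U)" by (rule assoc_mult_mat[OF C(1) Ua Uc])
    also have "\<dots> = \<rho> x" unfolding U2 by (rule right_mult_one_mat[OF C(1)])
    finally show ?thesis by (simp add: adj_adj)
  qed
  have le2: "leakage d (\<lambda>x. mat_adjoint U * (U * \<rho> x * mat_adjoint U) * mat_adjoint (mat_adjoint U)) \<le> leakage d (\<lambda>x. U * \<rho> x * mat_adjoint U)"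
    by (rule leak_mono[OF G]) (use FC in auto)
  then have "leakage d \<rho> \<le> leakage d (\<lambda>x. U * \<rho> x * mat_adjoint U)" unfolding inv by simp
  with le1 show ?thesis by (rule order.antisym)
qed

lemma channel_plin: assumes "channel d d' E" shows "plin d d' E"
  unfolding plin_def
proof (intro conjI ballI allI impI)
  note ch = assms[unfolded channel_def]
  fix A :: "complex mat" assume A: "A \<in> carrier_mat d d"
  show "E A \<in> carrier_mat d' d'" using ch A by auto
  { fix B :: "complex mat" assume "B \<in> carrier_mat d d" then show "E (A + B) = E A + E B" using ch A by auto }
  { fix c show "E (c \<cdot>\<^sub>m A) = c \<cdot>\<^sub>m E A" using ch A by auto }
  show "mtrace (E A) = mtrace A" using ch A by auto
  assume pA: "psd A"
  have A1: "A \<in> carrier_mat (1 * d) (1 * d)" using A by simp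
  have "psd (ampliate 1 d d' E A)" using ch A1 pA by blast
  moreover have "ampliate 1 d d' E A = E A"
  proof -
    have EA: "E A \<in> carrier_mat d' d'" using ch A by auto
    have bl: "block d 0 0 A = A" using A by (intro eq_matI) (auto simp: block_def)
    show ?thesis using EA bl by (intro eq_matI) (auto simp: ampliate_def)
  qed
  ultimately show "psd (E A)" by simp
qed

theorem theorem1:
  fixes d :: nat and \<rho> :: "'x::finite \<Rightarrow> complex mat"
  assumes "\<forall>x. density d (\<rho> x)"
  shows "(leakage d \<rho> \<ge> 0 \<and> (leakage d \<rho> = 0 \<longleftrightarrow> (\<forall>x x'. \<rho> x = \<rho> x'))) \<and>
    (\<forall>U. unitary_mat d U \<longrightarrow> leakage d (\<lambda>x. U * \<rho> x * mat_adjoint U) = leakage d \<rho>) \<and>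
    (\<forall>d' E. channel d d' E \<longrightarrow> leakage d' (\<lambda>x. E (\<rho> x)) \<le> leakage d \<rho>)"
proof (intro conjI allI impI iffI)
  show "leakage d \<rho> \<ge> 0" by (rule part_nonneg[OF assms])
  show "\<And>x x'. leakage d \<rho> = 0 \<Longrightarrow> \<rho> x = \<rho> x'" by (rule part_zero_imp[OF assms])
  show "\<forall>x x'. \<rho> x = \<rho> x' \<Longrightarrow> leakage d \<rho> = 0" by (rule part_eq_imp[OF assms])
  show "\<And>U. unitary_mat d U \<Longrightarrow> leakage d (\<lambda>x. U * \<rho> x * mat_adjoint U) = leakage d \<rho>"
    by (rule part_unitary[OF assms])
  show "\<And>d' E. channel d d' E \<Longrightarrow> leakage d' (\<lambda>x. E (\<rho> x)) \<le> leakage d \<rho>"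
    by (rule leak_mono[OF channel_plin]) (use assms in \<open>auto simp: density_def\<close>)
qed

end
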